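(* Let $A\in\mathbb R^{n\times n}$ be tridiagonal, $n\ge 2$, and let $Q\in\mathbb R^{2n\times 2n}$ be the orthogonal matrix produced by Algorithm 1 (described in the context) applied to $A$. Then for every $1\le k<n$, the matrices $Q(1{:}k,\,k{+}1{:}n)$ and $Q(n{+}1{:}n{+}k,\,k{+}1{:}n)$ have rank at most $2$.
   Context: A Givens rotation on rows $p\ne q$ is an orthogonal matrix $G\in\mathbb R^{2n\times 2n}$ equal to the identity except in the entries $(p,p),(p,q),(q,p),(q,q)$, which form a $2\times2$ rotation $\begin{bmatrix}c&s\\-s&c\end{bmatrix}$, $c^2+s^2=1$. "Rotate rows $p,q$ to annihilate $R(q,j)$" means: choose such a $G$ for which $(G^{T}R)(q,j)=0$ and then update $R\leftarrow G^{T}R$, $Q\leftarrow QG$. Algorithm 1: Initialize $Q=I_{2n}$ and $R=\begin{bmatrix}A\\ I_n\end{bmatrix}\in\mathbb R^{2n\times n}$. First rotate rows $1,n+1$ to annihilate $R(n+1,1)$; then rotate rows $1,2$ to annihilate $R(2,1)$. Then for $i=2,\dots,n$: (a) rotate rows $n+1,n+i$ to annihilate $R(n+i,i)$; (b) rotate rows $i,n+1$ to annihilate $R(n+1,i)$; (c) if $i<n$, rotate rows $i,i+1$ to annihilate $R(i+1,i)$. On output $QR=\begin{bmatrix}A\\ I\end{bmatrix}$ with $R$ upper triangular. Notation $Q(a{:}b,c{:}d)$ denotes the submatrix with rows $a,\dots,b$ and columns $c,\dots,d$. *)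

theory Defs
  imports "Jordan_Normal_Form.DL_Rank" "Jordan_Normal_Form.DL_Submatrix"
begin

(* Conventions: Jordan_Normal_Form matrices are 0-indexed; the algorithm below is
   written with the paper's 1-based indices, which are shifted by 1 where used. *)

definition tridiagonal :: "real mat \<Rightarrow> bool" where
  "tridiagonal A \<longleftrightarrow> (\<forall>i<dim_row A. \<forall>j<dim_col A. (i + 1 < j \<or> j + 1 < i) \<longrightarrow> A $$ (i, j) = 0)"

definition givens_mat :: "nat \<Rightarrow> nat \<Rightarrow> nat \<Rightarrow> real \<Rightarrow> real \<Rightarrow> real mat" where
  "givens_mat N p q c s = mat N N (\<lambda>(i, j).
     if i = p \<and> j = p then c
     else if i = p \<and> j = q then s
     else if i = q \<and> j = p then - s
     else if i = q \<and> j = q then c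
     else if i = j then 1 else 0)"

(* Any admissible choice of rotation is allowed. *)
definition givens_step :: "nat \<Rightarrow> nat \<times> nat \<times> nat \<Rightarrow> real mat \<times> real mat \<Rightarrow> real mat \<times> real mat \<Rightarrow> bool" where
  "givens_step N t S S' \<longleftrightarrow>
     (case t of (p, q, j) \<Rightarrow> case S of (Q, R) \<Rightarrow>
       (\<exists>c s. c\<^sup>2 + s\<^sup>2 = 1 \<and>
          (let G = givens_mat N (p - 1) (q - 1) c s in
             (transpose_mat G * R) $$ (q - 1, j - 1) = 0 \<and>
             S' = (Q * G, transpose_mat G * R))))"

inductive givens_run :: "nat \<Rightarrow> (nat \<times> nat \<times> nat) list \<Rightarrow> real mat \<times> real mat \<Rightarrow> real mat \<times> real mat \<Rightarrow> bool"
  for N where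
  run_nil: "givens_run N [] S S"
| run_cons: "givens_step N t S S' \<Longrightarrow> givens_run N ts S' S'' \<Longrightarrow> givens_run N (t # ts) S S''"

definition alg1_rotations :: "nat \<Rightarrow> (nat \<times> nat \<times> nat) list" where
  "alg1_rotations n = [(1, n + 1, 1), (1, 2, 1)] @
     concat (map (\<lambda>i. [(n + 1, n + i, i), (i, n + 1, i)] @ (if i < n then [(i, i + 1, i)] else []))
                 [2..<n + 1])"

definition alg1_init_R :: "nat \<Rightarrow> real mat \<Rightarrow> real mat" where
  "alg1_init_R n A = A @\<^sub>r 1\<^sub>m n"

definition alg1_Q :: "nat \<Rightarrow> real mat \<Rightarrow> real mat \<Rightarrow> bool" where
  "alg1_Q n A Q \<longleftrightarrow> (\<exists>R. givens_run (2 * n) (alg1_rotations n) (1\<^sub>m (2 * n), alg1_init_R n A) (Q, R))"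

end

theory Submission
  imports Defs
begin

lemma gdim[simp]: "dim_row (givens_mat N p q c s) = N" "dim_col (givens_mat N p q c s) = N"
  by (simp_all add: givens_mat_def)

lemma givens_entry:
  assumes Q: "Q \<in> carrier_mat N N" and "p < N" "q < N" "p \<noteq> q" "i < N" "j < N"
  shows "(Q * givens_mat N p q c s) $$ (i,j) =
    (if j = p then c * Q$$(i,p) - s * Q$$(i,q) else if j = q then s * Q$$(i,p) + c * Q$$(i,q) else Q$$(i,j))"
proof -
  define X where "X = (if j = p then c else if j = q then s else 0)"
  define Y where "Y = (if j = p then -s else if j = q then c else 0)"
  define Z where "Z = (if j \<noteq> p \<and> j \<noteq> q then 1 else (0::real))"
  have col: "\<And>l. l < N \<Longrightarrow> Q $$ (i,l) * givens_mat N p q c s $$ (l, j) =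
     (if l = p then Q $$ (i,l) * X else 0) + (if l = q then Q $$ (i,l) * Y else 0) + (if l = j then Q $$ (i,l) * Z else 0)"
    using assms unfolding X_def Y_def Z_def by (auto simp: givens_mat_def)
  have "(Q * givens_mat N p q c s) $$ (i,j) = (\<Sum>l\<in>{0..<N}. Q $$ (i,l) * givens_mat N p q c s $$ (l, j))"
    using assms by (simp add: scalar_prod_def gdim)
  also have "\<dots> = (\<Sum>l\<in>{0..<N}. (if l = p then Q $$ (i,l) * X else 0) + (if l = q then Q $$ (i,l) * Y else 0) + (if l = j then Q $$ (i,l) * Z else 0))"
    by (rule sum.cong) (auto simp: col)
  also have "\<dots> = Q $$ (i,p) * X + Q $$ (i,q) * Y + Q $$ (i,j) * Z"
    unfolding sum.distrib using assms by (simp add: sum.delta)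
  also have "\<dots> = (if j = p then c * Q$$(i,p) - s * Q$$(i,q) else if j = q then s * Q$$(i,p) + c * Q$$(i,q) else Q$$(i,j))"
    unfolding X_def Y_def Z_def using assms by auto
  finally show ?thesis .
qed

lemma run_inv:
  assumes "givens_run N ts S S'"
  shows "fst S \<in> carrier_mat N N \<Longrightarrow> Inv (fst S) \<Longrightarrow> (\<forall>(p,q,j)\<in>set ts. ok p q) \<Longrightarrow>
    (\<And>Q p q c s. Q \<in> carrier_mat N N \<Longrightarrow> Inv Q \<Longrightarrow> ok p q \<Longrightarrow> Inv (Q * givens_mat N (p-1) (q-1) c s)) \<Longrightarrow>
    Inv (fst S') \<and> fst S' \<in> carrier_mat N N"
  using assms
proof (induction rule: givens_run.induct)
  case (run_nil S)
  then show ?case by simp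
next
  case (run_cons t S S' ts S'')
  obtain p q j where t: "t = (p,q,j)" by (cases t)
  obtain Q R where S: "S = (Q,R)" by (cases S)
  from run_cons.hyps(1) obtain c s where S': "S' = (Q * givens_mat N (p-1) (q-1) c s, transpose_mat (givens_mat N (p-1) (q-1) c s) * R)"
    unfolding givens_step_def t S by (auto simp: Let_def)
  have ok: "ok p q" using run_cons.prems(3) t by auto
  have "Inv (Q * givens_mat N (p-1) (q-1) c s)"
    by (rule run_cons.prems(4)[OF _ _ ok]) (use run_cons.prems(1,2) S in simp_all)
  then have inv: "Inv (fst S')" unfolding S' fst_conv .
  have car: "fst S' \<in> carrier_mat N N"
  proof -
    have G: "givens_mat N (p-1) (q-1) c s \<in> carrier_mat N N" by (rule carrier_matI) simp_all
    have "Q \<in> carrier_mat N N" using run_cons.prems(1) unfolding S fst_conv .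
    then show ?thesis unfolding S' fst_conv using G by (rule mult_carrier_mat)
  qed
  have ts: "\<forall>(p,q,j)\<in>set ts. ok p q" using run_cons.prems(3) by simp
  show ?case using run_cons.IH[OF car inv ts run_cons.prems(4)] .
qed

inductive_cases run_consE: "givens_run N (t # ts) S S''"

lemma run_split: "givens_run N (xs @ ys) S S'' \<Longrightarrow> \<exists>S'. givens_run N xs S S' \<and> givens_run N ys S' S''"
proof (induction xs arbitrary: S)
  case Nil
  then show ?case by (metis append_Nil givens_run.run_nil)
next
  case (Cons x xs)
  from Cons.prems have "givens_run N (x # (xs @ ys)) S S''" by simp
  then obtain S1 where "givens_step N x S S1" "givens_run N (xs @ ys) S1 S''"
    by (rule run_consE)
  then show ?case using Cons.IH by (meson run_cons)
qed

lemma alg_split: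
  assumes "1 \<le> k" "k < n"
  defines "f \<equiv> (\<lambda>i. [(n + 1, n + i, i), (i, n + 1, i)] @ (if i < n then [(i, i + 1, i)] else []))"
  shows "alg1_rotations n = ([(1, n + 1, 1), (1, 2, 1)] @ concat (map f [2..<k+1])) @ concat (map f [k+1..<n+1])"
proof -
  have "[2..<n+1] = [2..<k+1] @ [k+1..<n+1]" using upt_add_eq_append[of 2 "k+1" "n-k"] assms by simp
  then show ?thesis unfolding alg1_rotations_def f_def by simp
qed

lemma rank2:
  fixes Q :: "real mat"
  assumes Q: "Q \<in> carrier_mat N N" and Ir: "Ir \<subseteq> {..<N}" and Jc: "Jc \<subseteq> {..<N}"
    and m: "card {i. i < N \<and> i \<in> Ir} = m"
    and span: "\<forall>c\<in>Jc. \<exists>a b. \<forall>i\<in>Ir. Q $$ (i,c) = a * u i + b * v i"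
  shows "vec_space.rank m (submatrix Q Ir Jc) \<le> 2"
proof -
  from span obtain a b where ab: "\<And>c i. c \<in> Jc \<Longrightarrow> i \<in> Ir \<Longrightarrow> Q $$ (i,c) = a c * u i + b c * v i"
    by metis
  define nc where "nc = card {j. j < N \<and> j \<in> Jc}"
  have cI: "{i. i < N \<and> i \<in> Ir} = Ir" "{j. j < N \<and> j \<in> Jc} = Jc" using Ir Jc by auto
  have fin: "finite Ir" "finite Jc" using Ir Jc finite_subset by auto
  define B1 where "B1 = mat m nc (\<lambda>(r,c). u (pick Ir r) * a (pick Jc c))"
  define B2 where "B2 = mat m nc (\<lambda>(r,c). v (pick Ir r) * b (pick Jc c))"
  have dimB: "submatrix Q Ir Jc \<in> carrier_mat m nc"
  proof -
    have dQ: "dim_row Q = N" "dim_col Q = N" using carrier_matD[OF Q] by simp_all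
    show ?thesis
    proof (rule carrier_matI)
      show "dim_row (submatrix Q Ir Jc) = m" unfolding dim_submatrix dQ by (rule m)
      show "dim_col (submatrix Q Ir Jc) = nc" unfolding dim_submatrix dQ nc_def ..
    qed
  qed
  have eq: "submatrix Q Ir Jc = B1 + B2"
  proof (rule eq_matI)
    fix r c assume r: "r < dim_row (B1 + B2)" and c: "c < dim_col (B1 + B2)"
    have d: "dim_row (B1 + B2) = m" "dim_col (B1 + B2) = nc" unfolding B1_def B2_def by simp_all
    have r': "r < card Ir" using r unfolding d m[unfolded cI(1), symmetric] .
    have c': "c < card Jc" using c unfolding d nc_def cI(2) .
    have "pick Ir r \<in> Ir" "pick Jc c \<in> Jc" using pick_in_set[of r Ir] pick_in_set[of c Jc] r' c' by auto
    moreover have "submatrix Q Ir Jc $$ (r,c) = Q $$ (pick Ir r, pick Jc c)"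
      using Q r' c' cI by (intro submatrix_index) auto
    ultimately show "submatrix Q Ir Jc $$ (r,c) = (B1 + B2) $$ (r,c)"
      using r c ab unfolding B1_def B2_def by (auto simp: mult.commute)
  qed (use dimB in \<open>auto simp: B1_def B2_def\<close>)
  have "vec_space.rank m (B1 + B2) \<le> vec_space.rank m B1 + vec_space.rank m B2"
    by (rule vec_space.rank_subadditive[of _ _ nc]) (auto simp: B1_def B2_def)
  moreover have "vec_space.rank m B1 \<le> 1"
    by (rule vec_space.rank_le_1_product_entries[of _ _ nc "\<lambda>r. u (pick Ir r)" "\<lambda>c. a (pick Jc c)"]) (auto simp: B1_def)
  moreover have "vec_space.rank m B2 \<le> 1"
    by (rule vec_space.rank_le_1_product_entries[of _ _ nc "\<lambda>r. v (pick Ir r)" "\<lambda>c. b (pick Jc c)"]) (auto simp: B2_def)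
  ultimately show ?thesis using eq by simp
qed


theorem theorem4p1:
  fixes A Q :: "real mat" and n :: nat
  assumes "A \<in> carrier_mat n n"
    and "tridiagonal A"
    and "n \<ge> 2"
    and "alg1_Q n A Q"
  shows "\<forall>k. 1 \<le> k \<and> k < n \<longrightarrow>
           vec_space.rank k (submatrix Q {0..<k} {k..<n}) \<le> 2 \<and>
           vec_space.rank k (submatrix Q {n..<n + k} {k..<n}) \<le> 2"
proof (intro allI impI)
  fix k assume k: "1 \<le> k \<and> k < n"
  define N where "N = 2 * n"
  obtain R where run: "givens_run N (alg1_rotations n) (1\<^sub>m N, alg1_init_R n A) (Q,R)"
    using assms(4) unfolding alg1_Q_def N_def by blast
  define f where "f = (\<lambda>i. [(n + 1, n + i, i), (i, n + 1, i)] @ (if i < n then [(i, i + 1, i)] else []))"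
  define pre where "pre = [(1, n + 1, 1), (1, 2, 1)] @ concat (map f [2..<k+1])"
  define post where "post = concat (map f [k+1..<n+1])"
  have "alg1_rotations n = pre @ post"
    unfolding pre_def post_def f_def using k by (intro alg_split) auto
  then obtain Sk where r1: "givens_run N pre (1\<^sub>m N, alg1_init_R n A) Sk"
    and r2: "givens_run N post Sk (Q,R)"
    using run_split run by metis
  define U where "U = {j. j \<le> k \<or> (n \<le> j \<and> j < n + k)}"
  define T where "T = {j. k \<le> j \<and> j < N \<and> (j \<le> n \<or> n + k \<le> j)}"
  define I where "I = {i. i < k \<or> (n \<le> i \<and> i < n + k)}"
  define Inv1 where "Inv1 = (\<lambda>Q::real mat. \<forall>i<N. \<forall>c<N. c \<notin> U \<longrightarrow> Q $$ (i,c) = (if i = c then 1 else 0))"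
  define ok1 where "ok1 = (\<lambda>p q::nat. p - 1 \<in> U \<and> q - 1 \<in> U \<and> p - 1 < N \<and> q - 1 < N \<and> p - 1 \<noteq> q - 1)"
  have pre_ok: "\<forall>(p,q,j)\<in>set pre. ok1 p q"
    unfolding pre_def f_def ok1_def U_def N_def using k by auto
  have "Inv1 (fst Sk) \<and> fst Sk \<in> carrier_mat N N"
  proof (rule run_inv[OF r1, of Inv1 ok1])
    show "fst (1\<^sub>m N, alg1_init_R n A) \<in> carrier_mat N N" by simp
    show "Inv1 (fst (1\<^sub>m N, alg1_init_R n A))" unfolding Inv1_def by simp
    show "\<forall>(p,q,j)\<in>set pre. ok1 p q" by (rule pre_ok)
    fix Q :: "real mat" and p q c s
    assume Q: "Q \<in> carrier_mat N N" and inv: "Inv1 Q" and ok: "ok1 p q"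
    show "Inv1 (Q * givens_mat N (p-1) (q-1) c s)"
      unfolding Inv1_def
    proof (intro allI impI)
      fix i j assume i: "i < N" and j: "j < N" and jU: "j \<notin> U"
      have "j \<noteq> p - 1" "j \<noteq> q - 1" using ok jU unfolding ok1_def by auto
      then have "(Q * givens_mat N (p-1) (q-1) c s) $$ (i,j) = Q $$ (i,j)"
        using givens_entry[OF Q _ _ _ i j, of "p-1" "q-1" c s] ok unfolding ok1_def by simp
      then show "(Q * givens_mat N (p-1) (q-1) c s) $$ (i,j) = (if i = j then 1 else 0)"
        using inv i j jU unfolding Inv1_def by simp
    qed
  qed
  then have inv1: "Inv1 (fst Sk)" and Qk: "fst Sk \<in> carrier_mat N N" by auto
  define u where "u = (\<lambda>i. fst Sk $$ (i,k))"
  define v where "v = (\<lambda>i. fst Sk $$ (i,n))"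
  define Inv2 where "Inv2 = (\<lambda>Q::real mat. \<forall>c\<in>T. \<exists>a b. \<forall>i\<in>I. Q $$ (i,c) = a * u i + b * v i)"
  define ok2 where "ok2 = (\<lambda>p q::nat. p - 1 \<in> T \<and> q - 1 \<in> T \<and> p - 1 \<noteq> q - 1)"
  have post_ok: "\<forall>(p,q,j)\<in>set post. ok2 p q"
    unfolding post_def f_def ok2_def T_def N_def using k by auto
  have TN: "T \<subseteq> {..<N}" unfolding T_def by auto
  have IN: "I \<subseteq> {..<N}" unfolding I_def N_def using k by auto
  have "Inv2 (fst (Q,R)) \<and> fst (Q,R) \<in> carrier_mat N N"
  proof (rule run_inv[OF r2, of Inv2 ok2])
    show "fst Sk \<in> carrier_mat N N" by (rule Qk)
    show "Inv2 (fst Sk)" unfolding Inv2_def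
    proof
      fix c assume cT: "c \<in> T"
      show "\<exists>a b. \<forall>i\<in>I. fst Sk $$ (i,c) = a * u i + b * v i"
      proof (cases "c = k")
        case True
        then show ?thesis unfolding u_def by (intro exI[of _ 1] exI[of _ 0]) simp
      next
        case ck: False
        show ?thesis
        proof (cases "c = n")
          case True
          then show ?thesis unfolding v_def by (intro exI[of _ 0] exI[of _ 1]) simp
        next
          case False
          have cU: "c \<notin> U" and cN: "c < N" using cT ck False unfolding T_def U_def by auto
          have "\<forall>i\<in>I. fst Sk $$ (i,c) = 0"
          proof
            fix i assume iI: "i \<in> I"
            have "i \<noteq> c" "i < N" using iI cT ck False IN unfolding I_def T_def by auto
            then show "fst Sk $$ (i,c) = 0" using inv1 cU cN unfolding Inv1_def by simp
          qed
          then show ?thesis by (intro exI[of _ 0] exI[of _ 0]) simp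
        qed
      qed
    qed
    show "\<forall>(p,q,j)\<in>set post. ok2 p q" by (rule post_ok)
    fix Q :: "real mat" and p q cc s
    assume Q: "Q \<in> carrier_mat N N" and inv: "Inv2 Q" and ok: "ok2 p q"
    have pT: "p - 1 \<in> T" and qT: "q - 1 \<in> T" and pq: "p - 1 \<noteq> q - 1" using ok unfolding ok2_def by auto
    obtain a1 b1 where ab1: "\<forall>i\<in>I. Q $$ (i,p-1) = a1 * u i + b1 * v i" using inv pT unfolding Inv2_def by blast
    obtain a2 b2 where ab2: "\<forall>i\<in>I. Q $$ (i,q-1) = a2 * u i + b2 * v i" using inv qT unfolding Inv2_def by blast
    show "Inv2 (Q * givens_mat N (p-1) (q-1) cc s)" unfolding Inv2_def
    proof
      fix c assume cT: "c \<in> T"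
      obtain a b where ab: "\<forall>i\<in>I. Q $$ (i,c) = a * u i + b * v i" using inv cT unfolding Inv2_def by blast
      have ent: "\<And>i. i \<in> I \<Longrightarrow> (Q * givens_mat N (p-1) (q-1) cc s) $$ (i,c) =
        (if c = p - 1 then cc * Q$$(i,p-1) - s * Q$$(i,q-1) else if c = q - 1 then s * Q$$(i,p-1) + cc * Q$$(i,q-1) else Q$$(i,c))"
        using givens_entry[OF Q _ _ pq _ _] pT qT cT TN IN by blast
      show "\<exists>a b. \<forall>i\<in>I. (Q * givens_mat N (p-1) (q-1) cc s) $$ (i,c) = a * u i + b * v i"
      proof (cases "c = p - 1")
        case True
        show ?thesis
          by (rule exI[of _ "cc * a1 - s * a2"], rule exI[of _ "cc * b1 - s * b2"])
             (use ent ab1 ab2 True in \<open>simp add: algebra_simps\<close>)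
      next
        case cp: False
        show ?thesis
        proof (cases "c = q - 1")
          case True
          show ?thesis
            by (rule exI[of _ "s * a1 + cc * a2"], rule exI[of _ "s * b1 + cc * b2"])
               (use ent ab1 ab2 True cp pq in \<open>simp add: algebra_simps\<close>)
        next
          case False
          show ?thesis
            by (rule exI[of _ a], rule exI[of _ b]) (use ent ab False cp in simp)
        qed
      qed
    qed
  qed
  then have inv2: "Inv2 Q" and QN: "Q \<in> carrier_mat N N" by auto
  have sp: "\<forall>c\<in>{k..<n}. \<exists>a b. \<forall>i\<in>I. Q $$ (i,c) = a * u i + b * v i"
    using inv2 unfolding Inv2_def T_def N_def by auto
  have sp1: "\<forall>c\<in>{k..<n}. \<exists>a b. \<forall>i\<in>{0..<k}. Q $$ (i,c) = a * u i + b * v i"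
    using sp unfolding I_def by fastforce
  have sp2: "\<forall>c\<in>{k..<n}. \<exists>a b. \<forall>i\<in>{n..<n+k}. Q $$ (i,c) = a * u i + b * v i"
    using sp unfolding I_def by fastforce
  have c1: "card {i. i < N \<and> i \<in> {0..<k}} = k"
  proof -
    have "{i. i < N \<and> i \<in> {0..<k}} = {0..<k}" using k unfolding N_def by auto
    then show ?thesis by simp
  qed
  have c2: "card {i. i < N \<and> i \<in> {n..<n+k}} = k"
  proof -
    have "{i. i < N \<and> i \<in> {n..<n+k}} = {n..<n+k}" using k unfolding N_def by auto
    then show ?thesis by simp
  qed
  have s1: "{0..<k} \<subseteq> {..<N}" "{k..<n} \<subseteq> {..<N}" "{n..<n+k} \<subseteq> {..<N}"
    using k unfolding N_def by auto
  show "vec_space.rank k (submatrix Q {0..<k} {k..<n}) \<le> 2 \<and>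
           vec_space.rank k (submatrix Q {n..<n + k} {k..<n}) \<le> 2"
    using rank2[OF QN s1(1) s1(2) c1 sp1] rank2[OF QN s1(3) s1(2) c2 sp2] by simp
qed

end
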